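(* Let $(\Delta x,\Delta y)\in\mathbb{R}^2$, $(o_x,o_y)\in\mathbb{R}^2$, $(x_0,y_0,\theta_0)\in\mathbb{R}^3$, $R>0$ and $t_{\max}>0$. Consider the forward right-turning arc robot path $$x(t)=x_0+R\sin\theta_0-R\sin(\theta_0-t),\quad y(t)=y_0-R\cos\theta_0+R\cos(\theta_0-t),\quad \theta(t)=\theta_0-t,\qquad t\in(0,t_{\max}),$$ (an arc of radius $R$ with centre angle $t_{\max}$), and let the anchoring point have world coordinates $\tilde x(t)=x(t)+\cos\theta(t)\Delta x-\sin\theta(t)\Delta y$, $\tilde y(t)=y(t)+\sin\theta(t)\Delta x+\cos\theta(t)\Delta y$, assumed different from $(o_x,o_y)$ for all $t$. Define $$A=o_x-x_0-R\sin\theta_0,\quad B=o_y-y_0+R\cos\theta_0,\quad C=A\Delta x+BR+B\Delta y,\quad D=AR+A\Delta y-B\Delta x,$$ assume $(C,D)\neq(0,0)$, and let $\varphi$ be the angle with $\cos\varphi=\frac{C}{\sqrt{C^2+D^2}}$, $\sin\varphi=\frac{D}{\sqrt{C^2+D^2}}$. If either $$\frac{A^2+B^2}{\sqrt{C^2+D^2}}>\cos(t-\theta_0-\varphi)\ \text{ for all } t\in(0,t_{\max}),$$ or $$\frac{A^2+B^2}{\sqrt{C^2+D^2}}<\cos(t-\theta_0-\varphi)\ \text{ for all } t\in(0,t_{\max}),$$ then the relative angle function $\Phi(t)=\arctan\left(\frac{o_y-\tilde y(t)}{o_x-\tilde x(t)}\right)-\theta(t)$ is monotonic on $(0,t_{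\max})$.
   Context: $(\Delta x,\Delta y)$ is the position of the tether–robot anchoring point $s$ in the robot's egocentric frame, and $(o_x,o_y)$ is the (fixed) position of the last tether–obstacle contact point $o$ in the world frame. In $\Phi$, $\arctan\left(\frac{o_y-\tilde y}{o_x-\tilde x}\right)$ denotes the direction angle of the vector from $(\tilde x,\tilde y)$ to $(o_x,o_y)$, taken as a continuous (differentiable) branch along the path. *)

theory Defs
  imports "HOL-Analysis.Analysis"
begin

end

theory Submission
  imports Defs
begin

lemma lift_deriv:
  fixes u v \<alpha> :: "real \<Rightarrow> real" and S :: "real set"
  assumes S: "open S" "t0 \<in> S"
    and du: "(u has_real_derivative u') (at t0)" and dv: "(v has_real_derivative v') (at t0)"
    and ca: "continuous (at t0) \<alpha>"
    and nz: "\<And>t. t \<in> S \<Longrightarrow> (u t, v t) \<noteq> (0,0)"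
    and dir: "\<And>t. t \<in> S \<Longrightarrow> (u t, v t) = (norm (u t, v t) * cos (\<alpha> t), norm (u t, v t) * sin (\<alpha> t))"
  shows "(\<alpha> has_real_derivative (u t0 * v' - v t0 * u') / ((u t0)\<^sup>2 + (v t0)\<^sup>2)) (at t0)"
proof -
  define a where "a = \<alpha> t0"
  define w1 where "w1 t = u t * cos a + v t * sin a" for t
  define w2 where "w2 t = v t * cos a - u t * sin a" for t
  have pd: "(pi/2::real) > 0" by simp
  obtain e where e: "e > 0" "\<And>t. dist t t0 < e \<Longrightarrow> dist (\<alpha> t) (\<alpha> t0) < pi/2"
    using ca pd unfolding continuous_at_eps_delta by blast
  define T where "T = ball t0 e \<inter> S"
  have T: "open T" "t0 \<in> T" using S e by (auto simp: T_def)
  have key: "a + arctan (w2 t / w1 t) = \<alpha> t" if t: "t \<in> T" for t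
  proof -
    define r where "r = norm (u t, v t)"
    have rp: "r > 0" using nz[of t] t by (auto simp: T_def r_def zero_prod_def)
    have uv: "u t = r * cos (\<alpha> t)" "v t = r * sin (\<alpha> t)" using dir[of t] t by (auto simp: T_def r_def)
    have w1: "w1 t = r * cos (\<alpha> t - a)" by (simp add: w1_def uv cos_diff algebra_simps)
    have w2: "w2 t = r * sin (\<alpha> t - a)" by (simp add: w2_def uv sin_diff algebra_simps)
    have bd: "\<bar>\<alpha> t - a\<bar> < pi/2" using e(2)[of t] t by (auto simp: T_def a_def dist_commute dist_real_def abs_minus_commute)
    have bd1: "-(pi/2) < \<alpha> t - a" "\<alpha> t - a < pi/2" using bd by linarith+
    have "cos (\<alpha> t - a) > 0" using bd1 by (intro cos_gt_zero_pi)
    hence "w2 t / w1 t = tan (\<alpha> t - a)" using rp by (simp add: w1 w2 tan_def)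
    moreover have "arctan (tan (\<alpha> t - a)) = \<alpha> t - a" using bd1 by (intro arctan_tan)
    ultimately show ?thesis by simp
  qed
  define r0 where "r0 = norm (u t0, v t0)"
  have r0p: "r0 > 0" using nz[of t0] S by (auto simp: r0_def zero_prod_def)
  have uv0: "u t0 = r0 * cos a" "v t0 = r0 * sin a" using dir[of t0] S by (auto simp: r0_def a_def)
  have w10: "w1 t0 = r0"
  proof -
    have "w1 t0 = r0 * (cos a * cos a + sin a * sin a)" unfolding w1_def uv0 by algebra
    thus ?thesis by (simp add: sin_cos_squared_add3)
  qed
  have w20: "w2 t0 = 0" by (simp add: w2_def uv0)
  have dw1: "(w1 has_real_derivative (u' * cos a + v' * sin a)) (at t0)"
    unfolding w1_def[abs_def] by (auto intro!: derivative_eq_intros du dv)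
  have dw2: "(w2 has_real_derivative (v' * cos a - u' * sin a)) (at t0)"
    unfolding w2_def[abs_def] by (auto intro!: derivative_eq_intros du dv)
  have "((\<lambda>t. a + arctan (w2 t / w1 t)) has_real_derivative (v' * cos a - u' * sin a) / r0) (at t0)"
    apply (rule derivative_eq_intros dw1 dw2 refl)+
    using r0p by (auto simp: w10 w20)
  moreover have "(v' * cos a - u' * sin a) / r0 = (u t0 * v' - v t0 * u') / ((u t0)\<^sup>2 + (v t0)\<^sup>2)"
  proof -
    have "(u t0)\<^sup>2 + (v t0)\<^sup>2 = r0\<^sup>2" by (simp add: uv0 power_mult_distrib flip: distrib_left)
    thus ?thesis using r0p by (simp add: uv0 field_simps power2_eq_square)
  qed
  ultimately show ?thesis using has_field_derivative_transform_within_open[OF _ T key] by simp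
qed

lemma mono_from_deriv:
  fixes f f' :: "real \<Rightarrow> real"
  assumes d: "\<And>t. t \<in> {a<..<b} \<Longrightarrow> (f has_real_derivative f' t) (at t)"
    and p: "\<And>t. t \<in> {a<..<b} \<Longrightarrow> f' t \<ge> 0"
  shows "mono_on {a<..<b} f"
proof (rule monotone_onI)
  fix x y assume xy: "x \<in> {a<..<b}" "y \<in> {a<..<b}" "x \<le> y"
  show "f x \<le> f y"
  proof (rule DERIV_nonneg_imp_increasing_open[OF xy(3)])
    fix z assume "x < z" "z < y"
    hence "z \<in> {a<..<b}" using xy by auto
    thus "\<exists>y. DERIV f z :> y \<and> y \<ge> 0" using d p by blast
  next
    have "\<forall>z\<in>{x..y}. isCont f z" using xy by (auto intro!: DERIV_isCont[OF d])
    thus "continuous_on {x..y} f" by (rule continuous_at_imp_continuous_on)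
  qed
qed

lemma antimono_from_deriv:
  fixes f f' :: "real \<Rightarrow> real"
  assumes d: "\<And>t. t \<in> {a<..<b} \<Longrightarrow> (f has_real_derivative f' t) (at t)"
    and p: "\<And>t. t \<in> {a<..<b} \<Longrightarrow> f' t \<le> 0"
  shows "antimono_on {a<..<b} f"
proof (rule monotone_onI)
  fix x y assume xy: "x \<in> {a<..<b}" "y \<in> {a<..<b}" "x \<le> y"
  show "f y \<le> f x"
  proof (rule DERIV_nonpos_imp_decreasing_open[OF xy(3)])
    fix z assume "x < z" "z < y"
    hence "z \<in> {a<..<b}" using xy by auto
    thus "\<exists>y. DERIV f z :> y \<and> y \<le> 0" using d p by blast
  next
    have "\<forall>z\<in>{x..y}. isCont f z" using xy by (auto intro!: DERIV_isCont[OF d])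
    thus "continuous_on {x..y} f" by (rule continuous_at_imp_continuous_on)
  qed
qed


theorem theorem2:
  fixes dx dy ox oy x0 y0 th0 R tmax \<phi> :: real
    and x y th sx sy \<alpha> :: "real \<Rightarrow> real"
  assumes R_pos: "R > 0" and tmax_pos: "tmax > 0"
    and x_def: "\<And>t. x t = x0 + R * sin th0 - R * sin (th0 - t)"
    and y_def: "\<And>t. y t = y0 - R * cos th0 + R * cos (th0 - t)"
    and th_def: "\<And>t. th t = th0 - t"
    and sx_def: "\<And>t. sx t = x t + cos (th t) * dx - sin (th t) * dy"
    and sy_def: "\<And>t. sy t = y t + sin (th t) * dx + cos (th t) * dy"
    and anchor_ne: "\<And>t. t \<in> {0<..<tmax} \<Longrightarrow> (sx t, sy t) \<noteq> (ox, oy)"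
    and CD_ne: "(let A = ox - x0 - R * sin th0; B = oy - y0 + R * cos th0;
                     C = A * dx + B * R + B * dy; D = A * R + A * dy - B * dx
                 in (C, D) \<noteq> (0, 0))"
    and phi_def: "(let A = ox - x0 - R * sin th0; B = oy - y0 + R * cos th0;
                     C = A * dx + B * R + B * dy; D = A * R + A * dy - B * dx
                 in cos \<phi> = C / sqrt (C\<^sup>2 + D\<^sup>2) \<and> sin \<phi> = D / sqrt (C\<^sup>2 + D\<^sup>2))"
    and cond: "(let A = ox - x0 - R * sin th0; B = oy - y0 + R * cos th0;
                     C = A * dx + B * R + B * dy; D = A * R + A * dy - B * dx
                 in (\<forall>t\<in>{0<..<tmax}. (A\<^sup>2 + B\<^sup>2) / sqrt (C\<^sup>2 + D\<^sup>2) > cos (t - th0 - \<phi>))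
                  \<or> (\<forall>t\<in>{0<..<tmax}. (A\<^sup>2 + B\<^sup>2) / sqrt (C\<^sup>2 + D\<^sup>2) < cos (t - th0 - \<phi>)))"
    and alpha_cont: "continuous_on {0<..<tmax} \<alpha>"
    and alpha_dir: "\<And>t. t \<in> {0<..<tmax} \<Longrightarrow>
        (ox - sx t, oy - sy t) = (norm (ox - sx t, oy - sy t) * cos (\<alpha> t), norm (ox - sx t, oy - sy t) * sin (\<alpha> t))"
  shows "mono_on {0<..<tmax} (\<lambda>t. \<alpha> t - th t) \<or> antimono_on {0<..<tmax} (\<lambda>t. \<alpha> t - th t)"
proof -
  define A where "A = ox - x0 - R * sin th0"
  define B where "B = oy - y0 + R * cos th0"
  define C where "C = A * dx + B * R + B * dy"
  define D where "D = A * R + A * dy - B * dx"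
  define K where "K = sqrt (C\<^sup>2 + D\<^sup>2)"
  define I where "I = {0<..<tmax}"
  have CD: "(C, D) \<noteq> (0, 0)" using CD_ne by (simp add: Let_def A_def B_def C_def D_def)
  have phi: "cos \<phi> = C / K" "sin \<phi> = D / K" using phi_def by (simp_all add: Let_def A_def B_def C_def D_def K_def)
  have cnd: "(\<forall>t\<in>I. (A\<^sup>2 + B\<^sup>2) / K > cos (t - th0 - \<phi>)) \<or> (\<forall>t\<in>I. (A\<^sup>2 + B\<^sup>2) / K < cos (t - th0 - \<phi>))"
    using cond by (simp add: Let_def A_def B_def C_def D_def K_def I_def)
  have "C\<^sup>2 + D\<^sup>2 > 0" using CD by (simp add: sum_power2_gt_zero_iff)
  hence Kp: "K > 0" unfolding K_def by simp
  have KC: "K * cos \<phi> = C" "K * sin \<phi> = D" using Kp phi by auto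
  define E where "E = R + dy"
  define u where "u t = A + E * sin (th0 - t) - dx * cos (th0 - t)" for t
  define v where "v t = B - E * cos (th0 - t) - dx * sin (th0 - t)" for t
  define u' where "u' t = - E * cos (th0 - t) - dx * sin (th0 - t)" for t
  define v' where "v' t = - E * sin (th0 - t) + dx * cos (th0 - t)" for t
  have ueq: "ox - sx t = u t" for t
    by (simp add: sx_def x_def th_def u_def A_def E_def algebra_simps)
  have veq: "oy - sy t = v t" for t
    by (simp add: sy_def y_def th_def v_def B_def E_def algebra_simps)
  have du: "(u has_real_derivative u' t) (at t)" for t
    unfolding u_def[abs_def] u'_def by (auto intro!: derivative_eq_intros)
  have dv: "(v has_real_derivative v' t) (at t)" for t
    unfolding v_def[abs_def] v'_def by (auto intro!: derivative_eq_intros)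
  have openI: "open I" by (simp add: I_def)
  have nz: "(u t, v t) \<noteq> (0,0)" if "t \<in> I" for t
    using anchor_ne[of t] that by (auto simp: I_def ueq[symmetric] veq[symmetric])
  have dir: "(u t, v t) = (norm (u t, v t) * cos (\<alpha> t), norm (u t, v t) * sin (\<alpha> t))" if "t \<in> I" for t
    using alpha_dir[of t] that by (simp add: I_def ueq veq)
  have ca: "continuous (at t) \<alpha>" if "t \<in> I" for t
    using alpha_cont openI that by (simp add: I_def continuous_on_eq_continuous_at)
  define N where "N t = (u t)\<^sup>2 + (v t)\<^sup>2" for t
  have Np: "N t > 0" if "t \<in> I" for t
    using nz[OF that] by (auto simp: N_def zero_prod_def sum_power2_gt_zero_iff)
  have ident: "u t * v' t - v t * u' t + N t = A\<^sup>2 + B\<^sup>2 - K * cos (t - th0 - \<phi>)" for t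
  proof -
    have "t - th0 - \<phi> = -((th0 - t) + \<phi>)" by simp
    hence "cos (t - th0 - \<phi>) = cos (th0 - t) * cos \<phi> - sin (th0 - t) * sin \<phi>"
      by (simp only: cos_minus cos_add)
    hence "K * cos (t - th0 - \<phi>) = cos (th0 - t) * (K * cos \<phi>) - sin (th0 - t) * (K * sin \<phi>)"
      by (simp add: right_diff_distrib mult.left_commute)
    hence "K * cos (t - th0 - \<phi>) = cos (th0 - t) * C - sin (th0 - t) * D"
      by (simp only: KC)
    moreover have "\<And>sn cs. (A + E * sn - dx * cs) * (- E * sn + dx * cs) - (B - E * cs - dx * sn) * (- E * cs - dx * sn)
       + ((A + E * sn - dx * cs)\<^sup>2 + (B - E * cs - dx * sn)\<^sup>2) = A\<^sup>2 + B\<^sup>2 - (cs * C - sn * D)"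
      unfolding C_def D_def E_def by algebra
    ultimately show ?thesis unfolding N_def u_def v_def u'_def v'_def by simp
  qed
  define F where "F t = (A\<^sup>2 + B\<^sup>2 - K * cos (t - th0 - \<phi>)) / N t" for t
  have dPhi: "((\<lambda>t. \<alpha> t - th t) has_real_derivative F t) (at t)" if t: "t \<in> I" for t
  proof -
    have "(\<alpha> has_real_derivative (u t * v' t - v t * u' t) / N t) (at t)"
      unfolding N_def by (rule lift_deriv[OF openI t du dv ca[OF t] nz dir])
    hence "((\<lambda>t. \<alpha> t - th t) has_real_derivative (u t * v' t - v t * u' t) / N t - (-1)) (at t)"
      unfolding th_def by (auto intro!: derivative_eq_intros)
    moreover have "(u t * v' t - v t * u' t) / N t - (-1) = F t"
      using Np[OF t] ident[of t] by (simp add: F_def field_simps)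
    ultimately show ?thesis by simp
  qed
  from cnd show ?thesis
  proof
    assume h: "\<forall>t\<in>I. (A\<^sup>2 + B\<^sup>2) / K > cos (t - th0 - \<phi>)"
    have "mono_on {0<..<tmax} (\<lambda>t. \<alpha> t - th t)"
    proof (rule mono_from_deriv)
      fix t assume t: "t \<in> {0<..<tmax}"
      thus "((\<lambda>t. \<alpha> t - th t) has_real_derivative F t) (at t)" using dPhi I_def by simp
      have "K * cos (t - th0 - \<phi>) < A\<^sup>2 + B\<^sup>2" using h t Kp by (auto simp: I_def field_simps)
      thus "F t \<ge> 0" using Np[of t] t by (simp add: F_def I_def)
    qed
    thus ?thesis ..
  next
    assume h: "\<forall>t\<in>I. (A\<^sup>2 + B\<^sup>2) / K < cos (t - th0 - \<phi>)"
    have "antimono_on {0<..<tmax} (\<lambda>t. \<alpha> t - th t)"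
    proof (rule antimono_from_deriv)
      fix t assume t: "t \<in> {0<..<tmax}"
      thus "((\<lambda>t. \<alpha> t - th t) has_real_derivative F t) (at t)" using dPhi I_def by simp
      have "K * cos (t - th0 - \<phi>) > A\<^sup>2 + B\<^sup>2" using h t Kp by (auto simp: I_def field_simps)
      thus "F t \<le> 0" using Np[of t] t by (simp add: F_def I_def divide_nonpos_pos)
    qed
    thus ?thesis ..
  qed
qed

end
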